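(* Let $p$ be a graph and $V_c(p)$ a vertex cover of $p$ such that the induced subgraph $p[V_c(p)]$ has at least two connected components. Let $Q$ be a set of join units of $p$ with respect to $V_c(p)$ whose union is $p$, and let $T$ be any join tree for $p$ over $Q$. Then $T$ has an internal node whose two children are labeled by subgraphs $p_1,p_2$ with $V(p_1)\cap V(p_2)\cap V_c(p)=\emptyset$.
   Context: Graphs are finite, simple and undirected. A vertex cover of $p$ is a set $V_c(p)\subseteq V(p)$ containing an endpoint of every edge of $p$; for $X\subseteq V(g)$, $g[X]$ denotes the subgraph of $g$ induced on $X$. A join unit of $p$ with respect to $V_c(p)$ is a subgraph $q$ of $p$ together with a designated anchor vertex $a_q\in V(q)\cap V_c(p)$ that is adjacent in $q$ to every other vertex of $q$ (an R1 unit). The union of subgraphs has as vertex set and edge set the unions of their vertex sets and edge sets. A join tree for $p$ over $Q$ is a rooted tree in which every internal node has exactly two children, each node is labeled by a subgraph of $p$, the leaves are labeled by elements of $Q$, each internal node is labeled by the union of its children's labels, and the root is labeled by $p$ (it models performing the joins pairwise in some order). *)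

theory Defs
  imports Main
begin

type_synonym 'a graph = "'a set \<times> 'a set set"

definition verts :: "'a graph \<Rightarrow> 'a set" where "verts G = fst G"
definition edges :: "'a graph \<Rightarrow> 'a set set" where "edges G = snd G"

definition is_graph :: "'a graph \<Rightarrow> bool" where
  "is_graph G \<longleftrightarrow> finite (verts G) \<and>
     (\<forall>e\<in>edges G. \<exists>u v. e = {u, v} \<and> u \<noteq> v \<and> u \<in> verts G \<and> v \<in> verts G)"

definition adj :: "'a graph \<Rightarrow> 'a \<Rightarrow> 'a \<Rightarrow> bool" where
  "adj G u v \<longleftrightarrow> {u, v} \<in> edges G"

definition subgraph :: "'a graph \<Rightarrow> 'a graph \<Rightarrow> bool" where
  "subgraph q p \<longleftrightarrow> is_graph q \<and> verts q \<subseteq> verts p \<and> edges q \<subseteq> edges p"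

definition vertex_cover :: "'a graph \<Rightarrow> 'a set \<Rightarrow> bool" where
  "vertex_cover p C \<longleftrightarrow> C \<subseteq> verts p \<and> (\<forall>e\<in>edges p. e \<inter> C \<noteq> {})"

definition induced :: "'a graph \<Rightarrow> 'a set \<Rightarrow> 'a graph" where
  "induced g X = (verts g \<inter> X, {e \<in> edges g. e \<subseteq> X})"

definition connected_components :: "'a graph \<Rightarrow> 'a set set" where
  "connected_components G =
     verts G // {(u, v). u \<in> verts G \<and> v \<in> verts G \<and> (adj G)\<^sup>*\<^sup>* u v}"

definition graph_union :: "'a graph \<Rightarrow> 'a graph \<Rightarrow> 'a graph" where
  "graph_union G H = (verts G \<union> verts H, edges G \<union> edges H)"

definition Union_graphs :: "'a graph set \<Rightarrow> 'a graph" where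
  "Union_graphs Q = (\<Union>(verts ` Q), \<Union>(edges ` Q))"

definition join_unit_with_anchor :: "'a graph \<Rightarrow> 'a set \<Rightarrow> 'a graph \<Rightarrow> 'a \<Rightarrow> bool" where
  "join_unit_with_anchor p C q a \<longleftrightarrow> subgraph q p \<and> a \<in> verts q \<and> a \<in> C \<and>
     (\<forall>v\<in>verts q. v \<noteq> a \<longrightarrow> adj q a v)"

definition join_unit :: "'a graph \<Rightarrow> 'a set \<Rightarrow> 'a graph \<Rightarrow> bool" where
  "join_unit p C q \<longleftrightarrow> (\<exists>a. join_unit_with_anchor p C q a)"

datatype 'g jtree = Leaf 'g | Node 'g "'g jtree" "'g jtree"

fun lbl :: "'g jtree \<Rightarrow> 'g" where
  "lbl (Leaf g) = g"
| "lbl (Node g l r) = g"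

fun subtrees :: "'g jtree \<Rightarrow> 'g jtree set" where
  "subtrees (Leaf g) = {Leaf g}"
| "subtrees (Node g l r) = insert (Node g l r) (subtrees l \<union> subtrees r)"

fun jtree_ok :: "'a graph \<Rightarrow> 'a graph set \<Rightarrow> 'a graph jtree \<Rightarrow> bool" where
  "jtree_ok p Q (Leaf g) \<longleftrightarrow> g \<in> Q \<and> subgraph g p"
| "jtree_ok p Q (Node g l r) \<longleftrightarrow> subgraph g p \<and> g = graph_union (lbl l) (lbl r) \<and>
     jtree_ok p Q l \<and> jtree_ok p Q r"

definition join_tree :: "'a graph \<Rightarrow> 'a graph set \<Rightarrow> 'a graph jtree \<Rightarrow> bool" where
  "join_tree p Q T \<longleftrightarrow> jtree_ok p Q T \<and> lbl T = p"

end

theory Submission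
  imports Defs
begin

lemma adj_sym: "adj G u v \<Longrightarrow> adj G v u"
  unfolding adj_def by (simp add: insert_commute)

lemma R_sym: "(adj G)\<^sup>*\<^sup>* u v \<Longrightarrow> (adj G)\<^sup>*\<^sup>* v u"
  by (induction rule: rtranclp_induct)
     (auto intro: converse_rtranclp_into_rtranclp adj_sym)

lemma key:
  assumes "\<forall>q\<in>Q. join_unit p C q"
  shows "jtree_ok p Q t \<Longrightarrow>
    \<not> (\<exists>g l r. Node g l r \<in> subtrees t \<and> verts (lbl l) \<inter> verts (lbl r) \<inter> C = {}) \<Longrightarrow>
    \<exists>a\<in>C. a \<in> verts (lbl t) \<and> (\<forall>v\<in>verts (lbl t) \<inter> C. (adj (induced p C))\<^sup>*\<^sup>* a v)"
proof (induction t)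
  case (Leaf q)
  then have "join_unit p C q" using assms by auto
  then obtain a where a: "join_unit_with_anchor p C q a" unfolding join_unit_def by blast
  have "(adj (induced p C))\<^sup>*\<^sup>* a v" if v: "v \<in> verts q \<inter> C" for v
  proof (cases "v = a")
    case False
    then have "adj q a v" using a v unfolding join_unit_with_anchor_def by auto
    then have "{a, v} \<in> edges p" using a unfolding join_unit_with_anchor_def subgraph_def adj_def by auto
    moreover have "{a,v} \<subseteq> C" using a v unfolding join_unit_with_anchor_def by auto
    ultimately have "adj (induced p C) a v" unfolding adj_def induced_def edges_def by auto
    then show ?thesis by auto
  qed auto
  then show ?case using a unfolding join_unit_with_anchor_def by auto
next
  case (Node g l r)
  from Node.prems have okl: "jtree_ok p Q l" and okr: "jtree_ok p Q r"
    and g: "g = graph_union (lbl l) (lbl r)" by auto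
  from Node.prems(2) have nl: "\<not> (\<exists>g l' r'. Node g l' r' \<in> subtrees l \<and> verts (lbl l') \<inter> verts (lbl r') \<inter> C = {})"
    and nr: "\<not> (\<exists>g l' r'. Node g l' r' \<in> subtrees r \<and> verts (lbl l') \<inter> verts (lbl r') \<inter> C = {})"
    by auto
  have ne: "verts (lbl l) \<inter> verts (lbl r) \<inter> C \<noteq> {}"
  proof
    assume "verts (lbl l) \<inter> verts (lbl r) \<inter> C = {}"
    moreover have "Node g l r \<in> subtrees (Node g l r)" by simp
    ultimately show False using Node.prems(2) by blast
  qed
  obtain a where a: "a\<in>C" "a \<in> verts (lbl l)" "\<forall>v\<in>verts (lbl l) \<inter> C. (adj (induced p C))\<^sup>*\<^sup>* a v"
    using Node.IH(1)[OF okl nl] by blast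
  obtain b where b: "b\<in>C" "b \<in> verts (lbl r)" "\<forall>v\<in>verts (lbl r) \<inter> C. (adj (induced p C))\<^sup>*\<^sup>* b v"
    using Node.IH(2)[OF okr nr] by blast
  obtain c where c: "c \<in> verts (lbl l) \<inter> verts (lbl r) \<inter> C" using ne by blast
  have ab: "(adj (induced p C))\<^sup>*\<^sup>* a b"
  proof -
    have "(adj (induced p C))\<^sup>*\<^sup>* a c" using a(3) c by blast
    moreover have "(adj (induced p C))\<^sup>*\<^sup>* c b" using R_sym[of "induced p C" b c] b(3) c by blast
    ultimately show ?thesis by (rule rtranclp_trans)
  qed
  have vg: "verts g = verts (lbl l) \<union> verts (lbl r)" using g unfolding graph_union_def verts_def by simp
  have "(adj (induced p C))\<^sup>*\<^sup>* a v" if "v \<in> verts g \<inter> C" for v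
  proof -
    have "v \<in> verts (lbl l) \<inter> C \<or> v \<in> verts (lbl r) \<inter> C" using that vg by blast
    then show ?thesis
    proof
      assume "v \<in> verts (lbl r) \<inter> C"
      then have "(adj (induced p C))\<^sup>*\<^sup>* b v" using b(3) by blast
      with ab show ?thesis by (rule rtranclp_trans)
    qed (use a(3) in blast)
  qed
  then show ?case using a vg by auto
qed

theorem mainTheorem6:
  fixes p :: "'a graph" and C :: "'a set" and Q :: "'a graph set" and T :: "'a graph jtree"
  assumes "is_graph p"
    and "vertex_cover p C"
    and "card (connected_components (induced p C)) \<ge> 2"
    and "\<forall>q\<in>Q. join_unit p C q"
    and "Union_graphs Q = p"
    and "join_tree p Q T"
  shows "\<exists>g l r. Node g l r \<in> subtrees T \<and> verts (lbl l) \<inter> verts (lbl r) \<inter> C = {}"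
proof (rule ccontr)
  assume n: "\<not> ?thesis"
  have ok: "jtree_ok p Q T" and lt: "lbl T = p" using assms(6) unfolding join_tree_def by auto
  have Cs: "C \<subseteq> verts p" using assms(2) unfolding vertex_cover_def by auto
  obtain a where a: "a \<in> C" "\<forall>v\<in>C. (adj (induced p C))\<^sup>*\<^sup>* a v"
    using key[OF assms(4) ok n] lt Cs by auto
  let ?G = "induced p C"
  let ?E = "{(u, v). u \<in> verts ?G \<and> v \<in> verts ?G \<and> (adj ?G)\<^sup>*\<^sup>* u v}"
  have vG: "verts ?G = C" using Cs unfolding induced_def verts_def by auto
  have "?E `` {u} = C" if "u \<in> C" for u
  proof -
    have "(adj ?G)\<^sup>*\<^sup>* u v" if "v \<in> C" for v
    proof -
      have "(adj ?G)\<^sup>*\<^sup>* u a" using R_sym[of ?G a u] a \<open>u \<in> C\<close> by blast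
      moreover have "(adj ?G)\<^sup>*\<^sup>* a v" using a that by blast
      ultimately show ?thesis by (rule rtranclp_trans)
    qed
    then show ?thesis using vG \<open>u \<in> C\<close> by auto
  qed
  then have "connected_components ?G \<subseteq> {C}"
    unfolding connected_components_def quotient_def using vG by auto
  then have "card (connected_components ?G) \<le> 1"
    using card_mono[of "{C}"] by fastforce
  then show False using assms(3) by simp
qed

end
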